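(* Assume $q^{2d}\neq1$ for all integers $d\ge1$. The algebra of universal invariants of the universal linear form, i.e. the subalgebra $\{\mathcal I\in\mathbb C\langle\mathcal A,\mathcal B\rangle : E\mathcal I=F\mathcal I=0,\ K\mathcal I=\mathcal I\}$ of the free algebra on $\mathcal A,\mathcal B$, has no finite set of generators.
   Context: Fix $q\in\mathbb C$ with $|q|=1$, $q\neq\pm1,\pm i$, and a square root $q^{1/2}$. $\mathbb C\langle\mathcal A,\mathcal B\rangle$ is the free associative algebra on two variables (the coefficients of the universal linear form $x\mathcal A+y\mathcal B$), with the action $K\mathcal A=q^{1/2}\mathcal A$, $K\mathcal B=q^{-1/2}\mathcal B$, $E\mathcal A=0$, $E\mathcal B=-q^{3/2}\mathcal A$, $F\mathcal A=-q^{-3/2}\mathcal B$, $F\mathcal B=0$, $K1=1$, $E1=F1=0$, extended by $K(ab)=K(a)K(b)$, $E(ab)=E(a)K(b)+K^{-1}(a)E(b)$, $F(ab)=F(a)K(b)+K^{-1}(a)F(b)$. *)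

theory Defs
  imports Complex_Main
begin

text \<open>The free algebra C<A,B>: elements are finitely supported functions from words
  (lists over bool; False stands for the generator A, True for B) to complex numbers.\<close>

type_synonym word = "bool list"
type_synonym freealg = "word \<Rightarrow> complex"

definition FA :: "freealg set" where
  "FA = {f. finite {w. f w \<noteq> 0}}"

definition mono :: "word \<Rightarrow> freealg" where
  "mono w = (\<lambda>v. if v = w then 1 else 0)"

definition fa_mul :: "freealg \<Rightarrow> freealg \<Rightarrow> freealg" where
  "fa_mul f g = (\<lambda>w. \<Sum>i\<le>length w. f (take i w) * g (drop i w))"

definition fa_smult :: "complex \<Rightarrow> freealg \<Rightarrow> freealg" where
  "fa_smult c f = (\<lambda>w. c * f w)"

definition lin_ext :: "(word \<Rightarrow> freealg) \<Rightarrow> freealg \<Rightarrow> freealg" where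
  "lin_ext T f = (\<lambda>v. \<Sum>w\<in>{w. f w \<noteq> 0}. f w * T w v)"

text \<open>Weight of a word under K, where s is the chosen square root q^(1/2):
  K A = s A, K B = s^(-1) B, K multiplicative.\<close>
primrec kwt :: "complex \<Rightarrow> word \<Rightarrow> complex" where
  "kwt s [] = 1"
| "kwt s (x # w) = (if x then inverse s else s) * kwt s w"

definition Kw :: "complex \<Rightarrow> word \<Rightarrow> freealg" where
  "Kw s w = fa_smult (kwt s w) (mono w)"

definition Kinvw :: "complex \<Rightarrow> word \<Rightarrow> freealg" where
  "Kinvw s w = fa_smult (inverse (kwt s w)) (mono w)"

definition Eletter :: "complex \<Rightarrow> bool \<Rightarrow> freealg" where
  "Eletter s x = (if x then fa_smult (- (s ^ 3)) (mono [False]) else (\<lambda>_. 0))"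

definition Fletter :: "complex \<Rightarrow> bool \<Rightarrow> freealg" where
  "Fletter s x = (if x then (\<lambda>_. 0) else fa_smult (- inverse (s ^ 3)) (mono [True]))"

text \<open>E(ab) = E(a)K(b) + K^{-1}(a)E(b), applied letter by letter; E 1 = 0.\<close>
primrec Ew :: "complex \<Rightarrow> word \<Rightarrow> freealg" where
  "Ew s [] = (\<lambda>_. 0)"
| "Ew s (x # w) = (\<lambda>v. fa_mul (Eletter s x) (Kw s w) v + fa_mul (Kinvw s [x]) (Ew s w) v)"

primrec Fw :: "complex \<Rightarrow> word \<Rightarrow> freealg" where
  "Fw s [] = (\<lambda>_. 0)"
| "Fw s (x # w) = (\<lambda>v. fa_mul (Fletter s x) (Kw s w) v + fa_mul (Kinvw s [x]) (Fw s w) v)"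

definition Kop :: "complex \<Rightarrow> freealg \<Rightarrow> freealg" where
  "Kop s = lin_ext (Kw s)"

definition Eop :: "complex \<Rightarrow> freealg \<Rightarrow> freealg" where
  "Eop s = lin_ext (Ew s)"

definition Fop :: "complex \<Rightarrow> freealg \<Rightarrow> freealg" where
  "Fop s = lin_ext (Fw s)"

definition invariants :: "complex \<Rightarrow> freealg set" where
  "invariants s = {I \<in> FA. Eop s I = (\<lambda>_. 0) \<and> Fop s I = (\<lambda>_. 0) \<and> Kop s I = I}"

inductive_set gen_alg :: "freealg set \<Rightarrow> freealg set" for G where
  gen: "g \<in> G \<Longrightarrow> g \<in> gen_alg G"
| one: "mono [] \<in> gen_alg G"
| add: "f \<in> gen_alg G \<Longrightarrow> g \<in> gen_alg G \<Longrightarrow> (\<lambda>w. f w + g w) \<in> gen_alg G"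
| smult: "f \<in> gen_alg G \<Longrightarrow> fa_smult c f \<in> gen_alg G"
| mult: "f \<in> gen_alg G \<Longrightarrow> g \<in> gen_alg G \<Longrightarrow> fa_mul f g \<in> gen_alg G"

end

theory Submission
  imports Defs
begin

definition Lc :: "bool \<Rightarrow> freealg \<Rightarrow> freealg" where
  "Lc a h = (\<lambda>v. case v of [] \<Rightarrow> 0 | y # v' \<Rightarrow> if y = a then h v' else 0)"
definition Rc :: "bool \<Rightarrow> freealg \<Rightarrow> freealg" where
  "Rc b h = (\<lambda>v. if v \<noteq> [] \<and> last v = b then h (butlast v) else 0)"

lemma Lc_Nil[simp]: "Lc a h [] = 0" by (simp add: Lc_def)
lemma Lc_Cons[simp]: "Lc a h (y # v) = (if y = a then h v else 0)" by (simp add: Lc_def)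
lemma Rc_Nil[simp]: "Rc b h [] = 0" by (simp add: Rc_def)
lemma Rc_snoc[simp]: "Rc b h (v @ [y]) = (if y = b then h v else 0)" by (simp add: Rc_def)

lemma Lc_add[simp]: "Lc a (\<lambda>w. f w + g w) v = Lc a f v + Lc a g v" by (cases v) auto
lemma Lc_mult[simp]: "Lc a (\<lambda>w. c * f w) v = c * Lc a f v" by (cases v) auto
lemma Lc_if[simp]: "Lc a (\<lambda>w. if P then f w else 0) v = (if P then Lc a f v else 0)" by (cases v) auto
lemma Lc_zero[simp]: "Lc a (\<lambda>w. 0) v = 0" by (cases v) auto
lemma Rc_add[simp]: "Rc a (\<lambda>w. f w + g w) v = Rc a f v + Rc a g v" by (cases v rule: rev_cases) auto
lemma Rc_mult[simp]: "Rc a (\<lambda>w. c * f w) v = c * Rc a f v" by (cases v rule: rev_cases) auto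
lemma Rc_if[simp]: "Rc a (\<lambda>w. if P then f w else 0) v = (if P then Rc a f v else 0)" by (cases v rule: rev_cases) auto
lemma Rc_zero[simp]: "Rc a (\<lambda>w. 0) v = 0" by (cases v rule: rev_cases) auto

lemma Lc_uminus[simp]: "Lc a (\<lambda>w. - f w) v = - Lc a f v" by (cases v) auto
lemma Rc_uminus[simp]: "Rc a (\<lambda>w. - f w) v = - Rc a f v" by (cases v rule: rev_cases) auto
lemma Lc_mult2[simp]: "Lc a (\<lambda>w. f w * c) v = Lc a f v * c" by (cases v) auto
lemma Rc_mult2[simp]: "Rc a (\<lambda>w. f w * c) v = Rc a f v * c" by (cases v rule: rev_cases) auto
lemma Lc_mono: "Lc a (mono w) v = mono (a # w) v" by (cases v) (auto simp: mono_def)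
lemma Rc_mono: "Rc b (mono w) v = mono (w @ [b]) v" by (cases v rule: rev_cases) (auto simp: mono_def)

lemma Lc_Rc: "Lc a (Rc b h) v = Rc b (Lc a h) v"
proof (cases v)
  case Nil then show ?thesis by simp
next
  case (Cons y v')
  show ?thesis
  proof (cases v' rule: rev_cases)
    case Nil then show ?thesis using Cons by (simp add: Rc_def)
  next
    case (snoc u z)
    have l: "Lc a (Rc b h) v = (if y = a then (if z = b then h u else 0) else 0)" using Cons snoc by simp
    have r: "Rc b (Lc a h) v = (if y = a then (if z = b then h u else 0) else 0)" using Cons snoc by (simp add: Rc_def)
    show ?thesis using l r by simp
  qed
qed

lemma kwt_append: "kwt s (u @ w) = kwt s u * kwt s w"
  by (induction u) auto

lemma fa_mul_smult: "fa_mul (fa_smult c f) g v = c * fa_mul f g v"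
  by (simp add: fa_mul_def fa_smult_def sum_distrib_left mult.assoc)
lemma fa_mul_zero: "fa_mul (\<lambda>_. 0) g v = 0"
  by (simp add: fa_mul_def)
lemma fa_mul_mono1: "fa_mul (mono [a]) g v = Lc a g v"
proof (cases v)
  case Nil then show ?thesis by (simp add: fa_mul_def mono_def)
next
  case (Cons y v')
  have "fa_mul (mono [a]) g v = (\<Sum>i\<le>Suc (length v'). mono [a] (take i (y # v')) * g (drop i (y # v')))"
    by (simp add: fa_mul_def Cons)
  also have "\<dots> = mono [a] (take 0 (y # v')) * g (drop 0 (y # v')) + (\<Sum>i\<le>length v'. mono [a] (take (Suc i) (y # v')) * g (drop (Suc i) (y # v')))"
    by (rule sum.atMost_Suc_shift)
  also have "\<dots> = (\<Sum>i\<le>length v'. if i = 0 then (if y = a then g v' else 0) else 0)"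
  proof -
    have eq: "\<And>i. i \<le> length v' \<Longrightarrow> mono [a] (take (Suc i) (y#v')) * g (drop (Suc i) (y#v')) = (if i = 0 then (if y = a then g v' else 0) else 0)"
      by (auto simp: mono_def)
    have z: "mono [a] (take 0 (y # v')) = 0" by (simp add: mono_def)
    have s1: "(\<Sum>i\<le>length v'. mono [a] (take (Suc i) (y#v')) * g (drop (Suc i) (y#v'))) = (\<Sum>i\<le>length v'. if i = 0 then (if y = a then g v' else 0) else 0)"
      by (intro sum.cong refl eq) simp
    show ?thesis unfolding s1 z by simp
  qed
  also have "\<dots> = Lc a g v" by (simp add: Cons)
  finally show ?thesis .
qed

lemma Kw_app: "Kw s w v = kwt s w * mono w v" by (simp add: Kw_def fa_smult_def)

lemma Ew_Cons: "Ew s (x # w) = (\<lambda>v. (if x then -(s^3) * kwt s w * mono (False # w) v else 0) + inverse (kwt s [x]) * Lc x (Ew s w) v)"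
proof -
  have k: "Kw s w = (\<lambda>v. kwt s w * mono w v)" by (rule ext) (simp add: Kw_app)
  show ?thesis
    by (rule ext) (auto simp: Eletter_def Kinvw_def fa_mul_smult fa_mul_zero fa_mul_mono1 k Lc_mono)
qed

lemma Fw_Cons: "Fw s (x # w) = (\<lambda>v. (if x then 0 else -(inverse (s^3)) * kwt s w * mono (True # w) v) + inverse (kwt s [x]) * Lc x (Fw s w) v)"
proof -
  have k: "Kw s w = (\<lambda>v. kwt s w * mono w v)" by (rule ext) (simp add: Kw_app)
  show ?thesis
    by (rule ext) (auto simp: Fletter_def Kinvw_def fa_mul_smult fa_mul_zero fa_mul_mono1 k Lc_mono)
qed

lemma Ew_snoc: "Ew s (u @ [b]) = (\<lambda>v. kwt s [b] * Rc b (Ew s u) v + (if b then -(s^3) * inverse (kwt s u) * mono (u @ [False]) v else 0))"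
proof (induction u)
  case Nil
  show ?case by (rule ext) (simp add: Ew_Cons del: Ew.simps(2))
next
  case (Cons x u)
  show ?case
    by (rule ext, simp del: Ew.simps(2) add: Ew_Cons Cons Lc_Rc Lc_mono Rc_mono kwt_append, simp add: algebra_simps)
qed

lemma Fw_snoc: "Fw s (u @ [b]) = (\<lambda>v. kwt s [b] * Rc b (Fw s u) v + (if b then 0 else -(inverse (s^3)) * inverse (kwt s u) * mono (u @ [True]) v))"
proof (induction u)
  case Nil
  show ?case by (rule ext) (simp add: Fw_Cons del: Fw.simps(2))
next
  case (Cons x u)
  show ?case
    by (rule ext, simp del: Fw.simps(2) add: Fw_Cons Cons Lc_Rc Lc_mono Rc_mono kwt_append, simp add: algebra_simps)
qed


lemma lin_ext_superset:
  assumes "finite S" "{w. g w \<noteq> 0} \<subseteq> S"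
  shows "lin_ext T g v = (\<Sum>u\<in>S. g u * T u v)"
  unfolding lin_ext_def using assms by (intro sum.mono_neutral_left) auto

lemma supp_Lc: "{w. Lc a g w \<noteq> 0} = Cons a ` {w. g w \<noteq> 0}"
proof (intro set_eqI iffI)
  fix w assume "w \<in> {w. Lc a g w \<noteq> 0}"
  then show "w \<in> Cons a ` {w. g w \<noteq> 0}" by (cases w) (auto split: if_splits)
qed auto

lemma supp_Rc: "{w. Rc b g w \<noteq> 0} = (\<lambda>u. u @ [b]) ` {w. g w \<noteq> 0}"
proof (intro set_eqI iffI)
  fix w assume "w \<in> {w. Rc b g w \<noteq> 0}"
  then show "w \<in> (\<lambda>u. u @ [b]) ` {w. g w \<noteq> 0}" by (cases w rule: rev_cases) (auto split: if_splits)
qed auto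

lemma lin_ext_Lc: "lin_ext T (Lc a g) v = (\<Sum>u\<in>{w. g w \<noteq> 0}. g u * T (a # u) v)"
  unfolding lin_ext_def supp_Lc by (subst sum.reindex) (auto simp: inj_on_def)

lemma lin_ext_Rc: "lin_ext T (Rc b g) v = (\<Sum>u\<in>{w. g w \<noteq> 0}. g u * T (u @ [b]) v)"
  unfolding lin_ext_def supp_Rc by (subst sum.reindex) (auto simp: inj_on_def)

lemma FA_Lc: "g \<in> FA \<Longrightarrow> Lc a g \<in> FA"
  unfolding FA_def by (simp add: supp_Lc)
lemma FA_Rc: "g \<in> FA \<Longrightarrow> Rc a g \<in> FA"
  unfolding FA_def by (simp add: supp_Rc)
lemma FA_comb: "f \<in> FA \<Longrightarrow> g \<in> FA \<Longrightarrow> (\<lambda>v. c * f v - d * g v) \<in> FA"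
  unfolding FA_def mem_Collect_eq by (rule finite_subset[of _ "{w. f w \<noteq> 0} \<union> {w. g w \<noteq> 0}"]) auto
lemma FA_mono: "mono w \<in> FA"
  unfolding FA_def mono_def by simp

lemma L_sum: "(\<Sum>u\<in>S. F u * Lc a (H u) v) = Lc a (\<lambda>w. \<Sum>u\<in>S. F u * H u w) v"
  by (cases v) (auto simp: sum.If_cases)
lemma R_sum: "(\<Sum>u\<in>S. F u * Rc a (H u) v) = Rc a (\<lambda>w. \<Sum>u\<in>S. F u * H u w) v"
  by (cases v rule: rev_cases) auto

lemma delta:
  assumes "finite S" "{w. g w \<noteq> 0} \<subseteq> S"
  shows "(\<Sum>u\<in>S. g u * (c u * mono u v)) = c v * g v"
proof -
  have "(\<Sum>u\<in>S. g u * (c u * mono u v)) = (\<Sum>u\<in>S. if u = v then g v * c v else 0)"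
    by (intro sum.cong) (auto simp: mono_def)
  also have "\<dots> = c v * g v" using assms by (auto simp: sum.delta')
  finally show ?thesis .
qed

lemma lift_L:
  assumes g: "g \<in> FA" and T: "\<And>u v. T (a # u) v = \<alpha> * \<beta> u * mono (a' # u) v + \<gamma> * Lc a (T u) v"
  shows "lin_ext T (Lc a g) v = \<alpha> * Lc a' (\<lambda>w. \<beta> w * g w) v + \<gamma> * Lc a (lin_ext T g) v"
proof -
  let ?S = "{w. g w \<noteq> 0}"
  have fin: "finite ?S" using g by (simp add: FA_def)
  have "lin_ext T (Lc a g) v = (\<Sum>u\<in>?S. g u * T (a # u) v)" by (rule lin_ext_Lc)
  also have "\<dots> = \<alpha> * (\<Sum>u\<in>?S. g u * Lc a' (\<lambda>w. \<beta> u * mono u w) v) + \<gamma> * (\<Sum>u\<in>?S. g u * Lc a (T u) v)"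
    by (simp add: T Lc_mono algebra_simps sum.distrib sum_distrib_left)
  also have "(\<Sum>u\<in>?S. g u * Lc a' (\<lambda>w. \<beta> u * mono u w) v) = Lc a' (\<lambda>w. \<Sum>u\<in>?S. g u * (\<beta> u * mono u w)) v"
    by (rule L_sum)
  also have "(\<lambda>w. \<Sum>u\<in>?S. g u * (\<beta> u * mono u w)) = (\<lambda>w. \<beta> w * g w)"
    using fin by (intro ext delta) auto
  also have "(\<Sum>u\<in>?S. g u * Lc a (T u) v) = Lc a (lin_ext T g) v"
    by (simp add: L_sum lin_ext_def)
  finally show ?thesis .
qed

lemma lift_R:
  assumes g: "g \<in> FA" and T: "\<And>u v. T (u @ [b]) v = \<gamma> * Rc b (T u) v + \<alpha> * \<beta> u * mono (u @ [b']) v"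
  shows "lin_ext T (Rc b g) v = \<gamma> * Rc b (lin_ext T g) v + \<alpha> * Rc b' (\<lambda>w. \<beta> w * g w) v"
proof -
  let ?S = "{w. g w \<noteq> 0}"
  have fin: "finite ?S" using g by (simp add: FA_def)
  have "lin_ext T (Rc b g) v = (\<Sum>u\<in>?S. g u * T (u @ [b]) v)" by (rule lin_ext_Rc)
  also have "\<dots> = \<alpha> * (\<Sum>u\<in>?S. g u * Rc b' (\<lambda>w. \<beta> u * mono u w) v) + \<gamma> * (\<Sum>u\<in>?S. g u * Rc b (T u) v)"
    by (simp add: T Rc_mono algebra_simps sum.distrib sum_distrib_left)
  also have "(\<Sum>u\<in>?S. g u * Rc b' (\<lambda>w. \<beta> u * mono u w) v) = Rc b' (\<lambda>w. \<Sum>u\<in>?S. g u * (\<beta> u * mono u w)) v"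
    by (rule R_sum)
  also have "(\<lambda>w. \<Sum>u\<in>?S. g u * (\<beta> u * mono u w)) = (\<lambda>w. \<beta> w * g w)"
    using fin by (intro ext delta) auto
  also have "(\<Sum>u\<in>?S. g u * Rc b (T u) v) = Rc b (lin_ext T g) v"
    by (simp add: R_sum lin_ext_def)
  finally show ?thesis by simp
qed

lemma E_L: "g \<in> FA \<Longrightarrow> Eop s (Lc a g) v = (if a then -(s^3) else 0) * Lc False (\<lambda>w. kwt s w * g w) v + inverse (kwt s [a]) * Lc a (Eop s g) v"
  unfolding Eop_def by (rule lift_L) (auto simp del: Ew.simps(2) simp add: Ew_Cons)
lemma E_R: "g \<in> FA \<Longrightarrow> Eop s (Rc b g) v = kwt s [b] * Rc b (Eop s g) v + (if b then -(s^3) else 0) * Rc False (\<lambda>w. inverse (kwt s w) * g w) v"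
  unfolding Eop_def by (rule lift_R) (auto simp del: Ew.simps(2) simp add: Ew_snoc)
lemma F_L: "g \<in> FA \<Longrightarrow> Fop s (Lc a g) v = (if a then 0 else -inverse(s^3)) * Lc True (\<lambda>w. kwt s w * g w) v + inverse (kwt s [a]) * Lc a (Fop s g) v"
  unfolding Fop_def by (rule lift_L) (auto simp del: Fw.simps(2) simp add: Fw_Cons)
lemma F_R: "g \<in> FA \<Longrightarrow> Fop s (Rc b g) v = kwt s [b] * Rc b (Fop s g) v + (if b then 0 else -inverse(s^3)) * Rc True (\<lambda>w. inverse (kwt s w) * g w) v"
  unfolding Fop_def by (rule lift_R) (auto simp del: Fw.simps(2) simp add: Fw_snoc)

lemma K_app: "g \<in> FA \<Longrightarrow> Kop s g v = kwt s v * g v"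
  unfolding Kop_def lin_ext_def Kw_app by (rule delta) (auto simp: FA_def)

lemma lin_comb:
  assumes "f \<in> FA" "g \<in> FA"
  shows "lin_ext T (\<lambda>v. c * f v - d * g v) v = c * lin_ext T f v - d * lin_ext T g v"
proof -
  let ?S = "{w. f w \<noteq> 0} \<union> {w. g w \<noteq> 0}"
  have fin: "finite ?S" using assms by (simp add: FA_def)
  have 1: "lin_ext T (\<lambda>v. c * f v - d * g v) v = (\<Sum>u\<in>?S. (c * f u - d * g u) * T u v)"
    by (rule lin_ext_superset[OF fin]) auto
  have 2: "lin_ext T f v = (\<Sum>u\<in>?S. f u * T u v)" by (rule lin_ext_superset[OF fin]) auto
  have 3: "lin_ext T g v = (\<Sum>u\<in>?S. g u * T u v)" by (rule lin_ext_superset[OF fin]) auto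
  show ?thesis unfolding 1 2 3 by (simp add: algebra_simps sum_subtractf sum_distrib_left)
qed


primrec Inv :: "complex \<Rightarrow> nat \<Rightarrow> freealg" where
  "Inv s 0 = mono []"
| "Inv s (Suc n) = (\<lambda>v. s^2 * Lc False (Rc True (Inv s n)) v - 1 * Lc True (Rc False (Inv s n)) v)"

lemma kwt_Rc: "kwt s w * Rc b h w = kwt s [b] * Rc b (\<lambda>u. kwt s u * h u) w"
  by (cases w rule: rev_cases) (auto simp: kwt_append)
lemma kwti_Rc: "inverse (kwt s w) * Rc b h w = inverse (kwt s [b]) * Rc b (\<lambda>u. inverse (kwt s u) * h u) w"
  by (cases w rule: rev_cases) (auto simp: kwt_append)
lemma kbal: "\<forall>w. g w \<noteq> 0 \<longrightarrow> kwt s w = 1 \<Longrightarrow> (\<lambda>w. kwt s w * g w) = g"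
  by (rule ext) (metis mult_1 mult_zero_right)
lemma kbali: "\<forall>w. g w \<noteq> 0 \<longrightarrow> kwt s w = 1 \<Longrightarrow> (\<lambda>w. inverse (kwt s w) * g w) = g"
  by (rule ext) (metis inverse_1 mult_1 mult_zero_right)

lemma Inv_props:
  assumes s0: "s \<noteq> 0"
  shows "Inv s n \<in> FA \<and> (\<forall>w. Inv s n w \<noteq> 0 \<longrightarrow> kwt s w = 1) \<and> Eop s (Inv s n) = (\<lambda>_. 0) \<and> Fop s (Inv s n) = (\<lambda>_. 0)"
proof (induction n)
  case 0
  have fa: "mono [] \<in> FA" by (rule FA_mono)
  have sm: "{w. mono [] w \<noteq> 0} = {[]}" by (auto simp: mono_def)
  show ?case using fa
    by (auto simp: sm mono_def Eop_def Fop_def lin_ext_def)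
next
  case (Suc n)
  define g where "g = Inv s n"
  have gFA: "g \<in> FA" and gb: "\<forall>w. g w \<noteq> 0 \<longrightarrow> kwt s w = 1" and gE: "Eop s g = (\<lambda>_. 0)" and gF: "Fop s g = (\<lambda>_. 0)"
    using Suc by (auto simp: g_def)
  define X where "X = Lc False (Rc True g)"
  define Y where "Y = Lc True (Rc False g)"
  have XFA: "X \<in> FA" and YFA: "Y \<in> FA" unfolding X_def Y_def by (intro FA_Lc FA_Rc gFA)+
  have I: "Inv s (Suc n) = (\<lambda>v. s^2 * X v - 1 * Y v)" by (simp add: X_def Y_def g_def)
  have k1: "(\<lambda>w. kwt s w * g w) = g" by (rule kbal[OF gb])
  have k2: "(\<lambda>w. inverse (kwt s w) * g w) = g" by (rule kbali[OF gb])
  have RT: "(\<lambda>w. kwt s w * Rc True g w) = (\<lambda>w. inverse s * Rc True g w)"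
    by (rule ext) (simp add: kwt_Rc[of s _ True] k1)
  have RF: "(\<lambda>w. kwt s w * Rc False g w) = (\<lambda>w. s * Rc False g w)"
    by (rule ext) (simp add: kwt_Rc[of s _ False] k1)
  have ERT: "Eop s (Rc True g) = (\<lambda>w. -(s^3) * Rc False g w)"
    by (rule ext) (simp add: E_R[OF gFA] gE k2)
  have ERF: "Eop s (Rc False g) = (\<lambda>w. 0)"
    by (rule ext) (simp add: E_R[OF gFA] gE)
  have FRT: "Fop s (Rc True g) = (\<lambda>w. 0)"
    by (rule ext) (simp add: F_R[OF gFA] gF)
  have FRF: "Fop s (Rc False g) = (\<lambda>w. -inverse(s^3) * Rc True g w)"
    by (rule ext) (simp add: F_R[OF gFA] gF k2)
  have EX: "Eop s X v = -(s^2) * Lc False (Rc False g) v" for v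
    unfolding X_def using s0 by (simp add: E_L[OF FA_Rc[OF gFA]] ERT power3_eq_cube power2_eq_square field_simps)
  have EY: "Eop s Y v = -(s^4) * Lc False (Rc False g) v" for v
    unfolding Y_def using s0 by (simp add: E_L[OF FA_Rc[OF gFA]] ERF RF power3_eq_cube power4_eq_xxxx field_simps)
  have FX: "Fop s X v = -inverse(s^4) * Lc True (Rc True g) v" for v
    unfolding X_def using s0 by (simp add: F_L[OF FA_Rc[OF gFA]] FRT RT, simp add: power3_eq_cube power4_eq_xxxx field_simps)
  have FY: "Fop s Y v = -inverse(s^2) * Lc True (Rc True g) v" for v
    unfolding Y_def using s0 by (simp add: F_L[OF FA_Rc[OF gFA]] FRF, simp add: power3_eq_cube power2_eq_square field_simps)
  have E0: "Eop s (Inv s (Suc n)) = (\<lambda>_. 0)"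
    unfolding I Eop_def
  proof (rule ext)
    fix v
    show "lin_ext (Ew s) (\<lambda>v. s\<^sup>2 * X v - 1 * Y v) v = 0"
      using EX[of v] EY[of v] unfolding lin_comb[OF XFA YFA] Eop_def
      by (simp add: power2_eq_square power4_eq_xxxx)
  qed
  have F0: "Fop s (Inv s (Suc n)) = (\<lambda>_. 0)"
    unfolding I Fop_def
  proof (rule ext)
    fix v
    show "lin_ext (Fw s) (\<lambda>v. s\<^sup>2 * X v - 1 * Y v) v = 0"
    proof -
      have "lin_ext (Fw s) (\<lambda>v. s\<^sup>2 * X v - 1 * Y v) v = s^2 * Fop s X v - 1 * Fop s Y v"
        unfolding lin_comb[OF XFA YFA] Fop_def ..
      also have "\<dots> = (s^2 * (-inverse(s^4)) + inverse (s^2)) * Lc True (Rc True g) v"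
        unfolding FX FY by (simp only: ring_distribs mult.assoc mult_1 mult_minus_left diff_minus_eq_add)
      also have "s^2 * (-inverse(s^4)) + inverse (s^2) = 0"
        using s0 by (simp add: field_simps power2_eq_square power4_eq_xxxx)
      finally show ?thesis by simp
    qed
  qed
  have FA1: "Inv s (Suc n) \<in> FA" unfolding I by (rule FA_comb[OF XFA YFA])
  have B: "kwt s w = 1" if "Inv s (Suc n) w \<noteq> 0" for w
  proof -
    have "X w \<noteq> 0 \<or> Y w \<noteq> 0" using that unfolding I by auto
    then show ?thesis
    proof
      assume "X w \<noteq> 0"
      then have "w \<in> Cons False ` ((\<lambda>u. u @ [True]) ` {w. g w \<noteq> 0})"
        unfolding X_def supp_Lc[of False "Rc True g", symmetric] supp_Rc[of True g, symmetric] by simp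
      then obtain u where w: "w = False # u @ [True]" "g u \<noteq> 0" by blast
      have "kwt s u = 1" using gb w(2) by blast
      then show ?thesis using s0 unfolding w(1) by (simp add: kwt_append)
    next
      assume "Y w \<noteq> 0"
      then have "w \<in> Cons True ` ((\<lambda>u. u @ [False]) ` {w. g w \<noteq> 0})"
        unfolding Y_def supp_Lc[of True "Rc False g", symmetric] supp_Rc[of False g, symmetric] by simp
      then obtain u where w: "w = True # u @ [False]" "g u \<noteq> 0" by blast
      have "kwt s u = 1" using gb w(2) by blast
      then show ?thesis using s0 unfolding w(1) by (simp add: kwt_append)
    qed
  qed
  show ?case using FA1 B E0 F0 by blast
qed

lemma Inv_val: "Inv s n (replicate n False @ replicate n True) = s ^ (2 * n)"
proof (induction n)
  case 0 then show ?case by (simp add: mono_def)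
next
  case (Suc n)
  have w: "replicate (Suc n) False @ replicate (Suc n) True = False # (replicate n False @ replicate n True) @ [True]"
    by (simp add: replicate_append_same)
  show ?case unfolding w using Suc by (simp del: append_Cons append_assoc add: power_mult power2_eq_square)
qed


definition cF :: "word \<Rightarrow> nat" where "cF w = length (filter Not w)"
definition cT :: "word \<Rightarrow> nat" where "cT w = length (filter (\<lambda>x. x) w)"
definition ww :: "nat \<Rightarrow> word" where "ww n = replicate n False @ replicate n True"

lemma kwt_count: "kwt s w = s ^ cF w * inverse s ^ cT w"
  by (induction w) (auto simp: cF_def cT_def)

lemma no_root:
  fixes s q :: complex
  assumes "s^2 = q" "\<forall>d::nat. d \<ge> 1 \<longrightarrow> q ^ (2 * d) \<noteq> 1" "s ^ d = 1"
  shows "d = 0"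
proof (rule ccontr)
  assume "d \<noteq> 0"
  have "q ^ (2 * d) = (s^2) ^ (2 * d)" using assms(1) by simp
  also have "\<dots> = s ^ (2 * (2 * d))" by (simp only: power_mult)
  also have "\<dots> = s ^ (d * 4)" by (rule arg_cong[where f="\<lambda>n. s ^ n"]) simp
  also have "\<dots> = (s ^ d) ^ 4" by (rule power_mult)
  also have "\<dots> = 1" by (simp add: assms(3))
  finally show False using assms(2) \<open>d \<noteq> 0\<close> by auto
qed

lemma bal_of_kwt:
  fixes s q :: complex
  assumes "s^2 = q" "\<forall>d::nat. d \<ge> 1 \<longrightarrow> q ^ (2 * d) \<noteq> 1" "s \<noteq> 0" "kwt s w = 1"
  shows "cF w = cT w"
proof -
  have e: "s ^ cF w = s ^ cT w" using assms(3,4) unfolding kwt_count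
    by (simp add: power_inverse field_simps)
  show ?thesis
  proof (cases "cT w \<le> cF w")
    case True
    then have "s ^ (cF w - cT w) * s ^ cT w = s ^ cT w" using e by (simp add: power_add[symmetric])
    then have "s ^ (cF w - cT w) = 1" using assms(3) by simp
    then have "cF w - cT w = 0" by (rule no_root[OF assms(1,2)])
    then show ?thesis using True by simp
  next
    case False
    then have "s ^ (cT w - cF w) * s ^ cF w = s ^ cT w" by (simp add: power_add[symmetric])
    then have "s ^ (cT w - cF w) * s ^ cF w = s ^ cF w" using e by simp
    then have "s ^ (cT w - cF w) = 1" using assms(3) by simp
    then have "cT w - cF w = 0" by (rule no_root[OF assms(1,2)])
    then show ?thesis using False by simp
  qed
qed

lemma cnt_append: "cF (u @ v) = cF u + cF v" "cT (u @ v) = cT u + cT v"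
  by (auto simp: cF_def cT_def)

lemma mul_bal:
  assumes "\<forall>w. f w \<noteq> 0 \<longrightarrow> cF w = cT w" "\<forall>w. g w \<noteq> 0 \<longrightarrow> cF w = cT w" "fa_mul f g w \<noteq> 0"
  shows "cF w = cT w"
proof -
  obtain i where "f (take i w) * g (drop i w) \<noteq> 0"
    using assms(3) unfolding fa_mul_def by (meson sum.neutral)
  then have "cF (take i w) = cT (take i w)" "cF (drop i w) = cT (drop i w)" using assms(1,2) by auto
  then show ?thesis using cnt_append[of "take i w" "drop i w"] by simp
qed

lemma take_ww_unbal:
  assumes "0 < i" "i < 2 * n"
  shows "cF (take i (ww n)) \<noteq> cT (take i (ww n))"
proof -
  have "take i (ww n) = replicate (min i n) False @ replicate (min (i - n) n) True"
    by (simp add: ww_def take_append)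
  then show ?thesis using assms by (simp add: cF_def cT_def cnt_append)
qed

lemma mul_ww:
  assumes "\<forall>w. f w \<noteq> 0 \<longrightarrow> cF w = cT w" "f (ww n) = 0" "g (ww n) = 0"
  shows "fa_mul f g (ww n) = 0"
  unfolding fa_mul_def
proof (rule sum.neutral, rule ballI)
  fix i assume i: "i \<in> {..length (ww n)}"
  have l: "length (ww n) = 2 * n" by (simp add: ww_def)
  show "f (take i (ww n)) * g (drop i (ww n)) = 0"
  proof (cases "i = 0")
    case True then show ?thesis using assms(3) by simp
  next
    case False
    show ?thesis
    proof (cases "i = 2 * n")
      case True then show ?thesis using assms(2) l by simp
    next
      case False2: False
      then have "i < 2 * n" using i l by simp
      then have "f (take i (ww n)) = 0" using take_ww_unbal[of i n] False assms(1) by auto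
      then show ?thesis by simp
    qed
  qed
qed

lemma gen_P:
  assumes G: "\<forall>g\<in>G. \<forall>w. g w \<noteq> 0 \<longrightarrow> cF w = cT w \<and> length w \<le> N" and f: "f \<in> gen_alg G"
  shows "(\<forall>w. f w \<noteq> 0 \<longrightarrow> cF w = cT w) \<and> (\<forall>n. n > N \<longrightarrow> f (ww n) = 0)"
  using f
proof (induction rule: gen_alg.induct)
  case (gen g)
  have "g (ww n) = 0" if "n > N" for n
  proof (rule ccontr)
    assume "g (ww n) \<noteq> 0"
    then have "length (ww n) \<le> N" using G gen by blast
    then show False using that by (simp add: ww_def)
  qed
  then show ?case using G gen by blast
next
  case one
  show ?case by (auto simp: mono_def ww_def cF_def cT_def)
next
  case (add f g)
  have "cF w = cT w" if "f w + g w \<noteq> 0" for w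
  proof -
    have "f w \<noteq> 0 \<or> g w \<noteq> 0" using that by auto
    then show ?thesis using add.IH by blast
  qed
  then show ?case using add.IH by auto
next
  case (smult f c)
  then show ?case by (auto simp: fa_smult_def)
next
  case (mult f g)
  then show ?case using mul_bal[of f g] mul_ww[of f _ g] by blast
qed

theorem proposition6p1:
  fixes q s :: complex
  assumes "norm q = 1" and "q \<noteq> 1" and "q \<noteq> -1" and "q \<noteq> \<i>" and "q \<noteq> - \<i>"
    and "s ^ 2 = q"
    and "\<forall>d::nat. d \<ge> 1 \<longrightarrow> q ^ (2 * d) \<noteq> 1"
  shows "\<not> (\<exists>G. finite G \<and> G \<subseteq> invariants s \<and> gen_alg G = invariants s)"
proof
  assume "\<exists>G. finite G \<and> G \<subseteq> invariants s \<and> gen_alg G = invariants s"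
  then obtain G where fin: "finite G" and sub: "G \<subseteq> invariants s" and eq: "gen_alg G = invariants s" by blast
  have s0: "s \<noteq> 0" using assms(1,6) by auto
  have balI: "cF w = cT w" if "I \<in> invariants s" "I w \<noteq> 0" for I w
  proof -
    have "I \<in> FA" "Kop s I = I" using that(1) by (auto simp: invariants_def)
    then have "kwt s w * I w = I w" using K_app by metis
    then have "kwt s w = 1" using that(2) by simp
    then show ?thesis by (rule bal_of_kwt[OF assms(6,7) s0])
  qed
  define W where "W = (\<Union>g\<in>G. {w. g w \<noteq> 0})"
  have finW: "finite W" unfolding W_def using fin sub by (auto simp: invariants_def FA_def)
  define N where "N = Max (insert 0 (length ` W))"
  have Gb: "\<forall>g\<in>G. \<forall>w. g w \<noteq> 0 \<longrightarrow> cF w = cT w \<and> length w \<le> N"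
  proof (intro ballI allI impI conjI)
    fix g w assume "g \<in> G" "g w \<noteq> 0"
    then show "cF w = cT w" using balI sub by blast
    have "w \<in> W" using \<open>g \<in> G\<close> \<open>g w \<noteq> 0\<close> by (auto simp: W_def)
    then show "length w \<le> N" unfolding N_def using finW by (intro Max_ge) auto
  qed
  have inv: "Inv s (Suc N) \<in> invariants s"
  proof -
    have P: "Inv s (Suc N) \<in> FA" "\<forall>w. Inv s (Suc N) w \<noteq> 0 \<longrightarrow> kwt s w = 1"
      "Eop s (Inv s (Suc N)) = (\<lambda>_. 0)" "Fop s (Inv s (Suc N)) = (\<lambda>_. 0)"
      using Inv_props[OF s0, of "Suc N"] by blast+
    have "Kop s (Inv s (Suc N)) = (\<lambda>w. kwt s w * Inv s (Suc N) w)"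
      by (rule ext) (rule K_app[OF P(1)])
    also have "\<dots> = Inv s (Suc N)" by (rule kbal[OF P(2)])
    finally show ?thesis using P unfolding invariants_def by blast
  qed
  then have "Inv s (Suc N) \<in> gen_alg G" using eq by simp
  then have "Inv s (Suc N) (ww (Suc N)) = 0" using gen_P[OF Gb] by blast
  moreover have "Inv s (Suc N) (ww (Suc N)) \<noteq> 0" using Inv_val[of s "Suc N"] s0 by (simp add: ww_def)
  ultimately show False by simp
qed

end
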